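(* Let $n\ge3$ and suppose $T=T_\lambda(r,m)$ acts linearly and inner faithfully on $\Bbbk\overline{Q}$ so that $g$ acts by a reflection: $g\cdot e_i=e_{n-(d+i)}$, $g\cdot a_i=\mu_ia^*_{n-(d+i+1)}$, $g\cdot a_i^*=\mu_i^*a_{n-(d+i+1)}$ for some integer $0\le d\le n-1$ and $\mu_i,\mu_i^*\in\Bbbk^\times$, and that this action descends to an action on $\Pi_Q$. Let $\sigma$ be the quiver-Taft map. (I) If $j$ is a vertex with $g\cdot j=j$ and $c_j,c_j^*\in\Bbbk$ satisfy $\sigma(a_j)=c_ja^*_{j-1}$, $\sigma(a_j^* )=c_j^*a_j^*$, then $c_j^*=-\mu_j^{-1}c_j$; and if $c_j\neq0$ then $\mu_i\mu_i^*=1$ for all $i$. (II) If $k$ is a vertex with $g\cdot k=k+1$ and $g\cdot(k+1)=k$, and $c_k,c_k^*\in\Bbbk$ satisfy $\sigma(a_k)=c_ke_k$, $\sigma(a_k^* )=c_k^*e_{k+1}$, and if for all $i$ the identity $a_i^*\sigma(a_i)+\sigma(a_i^* )(g\cdot a_i)-a_{i+1}\sigma(a_{i+1}^* )-\sigma(a_{i+1})(g\cdot a_{i+1}^* )=0$ holds in $\Pi_Q$, then $c_k=-\mu_kc_k^*$; and if $c_k\neq0$ then $\lambda=-1$ and $\mu_i\mu_i^*=1$ for all $i$.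
   Context: Let $\Bbbk$ be a field, $r>1$ and $m$ positive integers with $r\mid m$, and $\lambda\in\Bbbk$ a primitive $r$-th root of unity, with $r$ coprime to the characteristic of $\Bbbk$. The generalized Taft algebra $T=T_\lambda(r,m)$ is the Hopf algebra generated by $g,x$ with relations $gx=\lambda xg$, $g^m=1$, $x^r=0$, $\Delta(g)=g\otimes g$, $\Delta(x)=1\otimes x+x\otimes g$, $\varepsilon(g)=1,\varepsilon(x)=0$, $S(g)=g^{-1}$, $S(x)=-xg^{-1}$. An action of $T$ on an algebra $A$ is a $T$-module algebra structure; so $g$ acts by an algebra automorphism and $x\cdot(ab)=a(x\cdot b)+(x\cdot a)(g\cdot b)$. It is inner faithful if no nonzero Hopf ideal $I$ of $T$ satisfies $I\cdot A=0$. Vertex indices are taken modulo $n$. $\overline{Q}$ has vertices $0,\dots,n-1$ and arrows $a_i:i\to i+1$, $a_i^*:i+1\to i$; in $\Bbbk\overline{Q}$, $e_i$ is the trivial path at $i$, $s(a),t(a)$ source and target, and $pq$ is concatenation ($p$ then $q$) if $t(p)=s(q)$, else $0$. $\Pi_Q=\Bbbk\overline{Q}/(\Omega)$, $(\Omega)$ the ideal generated by $a_i^*a_i-a_{i+1}a_{i+1}^*$; the action descends to $\Pi_Q$ if $(\Omega)$ is stable under $g$ and $x$. A linear action: $g$ acts by a path-length-preserving automorphism ($g\cdot e_i=e_{g\cdot i}$) and $x$ maps vertices into the span of vertices and arrows into the span of vertices and arrows. Then there are scalars $\gamma_i$ with $x\cdot e_i=\gamma_ie_i-\gamma_i\lambda^{-1}e_{g\cdot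 i}$; the quiver-Taft map $\sigma$ is the linear map on the span of vertices and arrows with $\sigma(e_i)=0$ and $\sigma(a)=x\cdot a-\gamma_{t(a)}a+\gamma_{s(a)}\lambda^{-1}(g\cdot a)$ for arrows $a$. *)

theory Defs
  imports Main
begin

inductive_set lspan :: "('a \<Rightarrow> 'k::field) set \<Rightarrow> ('a \<Rightarrow> 'k) set" for S where
  zero: "(\<lambda>_. 0) \<in> lspan S"
| step: "v \<in> S \<Longrightarrow> w \<in> lspan S \<Longrightarrow> (\<lambda>x. c * v x + w x) \<in> lspan S"

definition primroot :: "'k::field \<Rightarrow> nat \<Rightarrow> bool" where
  "primroot lam r \<longleftrightarrow> lam ^ r = 1 \<and> (\<forall>s. 0 < s \<and> s < r \<longrightarrow> lam ^ s \<noteq> 1)"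

text \<open>An element of T is given by its coefficients w.r.t. the PBW basis g^i x^j,
  0 <= i < m, 0 <= j < r; the pair (i,j) stands for g^i x^j.\<close>

type_synonym 'k tel = "nat \<times> nat \<Rightarrow> 'k"
type_synonym 'k ttel = "(nat \<times> nat) \<times> (nat \<times> nat) \<Rightarrow> 'k"

definition TB :: "nat \<Rightarrow> nat \<Rightarrow> (nat \<times> nat) set" where
  "TB r m = {..<m} \<times> {..<r}"

definition Tcar :: "nat \<Rightarrow> nat \<Rightarrow> 'k::field tel set" where
  "Tcar r m = {h. \<forall>p. p \<notin> TB r m \<longrightarrow> h p = 0}"

definition tb :: "nat \<times> nat \<Rightarrow> 'k::field tel" where
  "tb p = (\<lambda>c. if c = p then 1 else 0)"

text \<open>Structure constants: g^i x^j * g^k x^l = lam^(-jk) g^(i+k) x^(j+l)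
  (from gx = lam xg, g^m = 1, x^r = 0).\<close>
definition bprod :: "'k::field \<Rightarrow> nat \<Rightarrow> nat \<Rightarrow> nat \<times> nat \<Rightarrow> nat \<times> nat \<Rightarrow> nat \<times> nat \<Rightarrow> 'k" where
  "bprod lam r m p q c =
     (if (fst p + fst q) mod m = fst c \<and> snd p + snd q = snd c \<and> snd c < r
      then (inverse lam) ^ (snd p * fst q) else 0)"

definition tmul :: "'k::field \<Rightarrow> nat \<Rightarrow> nat \<Rightarrow> 'k tel \<Rightarrow> 'k tel \<Rightarrow> 'k tel" where
  "tmul lam r m h h' = (\<lambda>c. \<Sum>p\<in>TB r m. \<Sum>q\<in>TB r m. h p * h' q * bprod lam r m p q c)"

primrec tpow :: "'k::field \<Rightarrow> nat \<Rightarrow> nat \<Rightarrow> 'k tel \<Rightarrow> nat \<Rightarrow> 'k tel" where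
  "tpow lam r m h 0 = tb (0, 0)"
| "tpow lam r m h (Suc k) = tmul lam r m (tpow lam r m h k) h"

definition ttens :: "'k::field tel \<Rightarrow> 'k tel \<Rightarrow> 'k ttel" where
  "ttens h h' = (\<lambda>c. h (fst c) * h' (snd c))"

definition ttmul :: "'k::field \<Rightarrow> nat \<Rightarrow> nat \<Rightarrow> 'k ttel \<Rightarrow> 'k ttel \<Rightarrow> 'k ttel" where
  "ttmul lam r m P Q = (\<lambda>c. \<Sum>p1\<in>TB r m. \<Sum>p2\<in>TB r m. \<Sum>q1\<in>TB r m. \<Sum>q2\<in>TB r m.
      P (p1, p2) * Q (q1, q2) * bprod lam r m p1 q1 (fst c) * bprod lam r m p2 q2 (snd c))"

primrec ttpow :: "'k::field \<Rightarrow> nat \<Rightarrow> nat \<Rightarrow> 'k ttel \<Rightarrow> nat \<Rightarrow> 'k ttel" where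
  "ttpow lam r m P 0 = ttens (tb (0, 0)) (tb (0, 0))"
| "ttpow lam r m P (Suc k) = ttmul lam r m (ttpow lam r m P k) P"

definition Delta_g :: "'k::field ttel" where
  "Delta_g = ttens (tb (1, 0)) (tb (1, 0))"

definition Delta_x :: "'k::field ttel" where
  "Delta_x = (\<lambda>c. ttens (tb (0, 0)) (tb (0, 1)) c + ttens (tb (0, 1)) (tb (1, 0)) c)"

definition tcoprod :: "'k::field \<Rightarrow> nat \<Rightarrow> nat \<Rightarrow> 'k tel \<Rightarrow> 'k ttel" where
  "tcoprod lam r m h = (\<lambda>c. \<Sum>p\<in>TB r m.
      h p * ttmul lam r m (ttpow lam r m Delta_g (fst p)) (ttpow lam r m Delta_x (snd p)) c)"

definition teps :: "nat \<Rightarrow> 'k::field tel \<Rightarrow> 'k" where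
  "teps m h = (\<Sum>i<m. h (i, 0))"

text \<open>Antipode: S(g) = g^(-1) = g^(m-1), S(x) = - x g^(-1); S is an anti-homomorphism,
  so S(g^i x^j) = S(x)^j S(g)^i.\<close>
definition tanti :: "'k::field \<Rightarrow> nat \<Rightarrow> nat \<Rightarrow> 'k tel \<Rightarrow> 'k tel" where
  "tanti lam r m h = (\<lambda>c. \<Sum>p\<in>TB r m.
      h p * tmul lam r m
        (tpow lam r m (\<lambda>c'. - tmul lam r m (tb (0, 1)) (tb (m - 1, 0)) c') (snd p))
        (tpow lam r m (tb (m - 1, 0)) (fst p)) c)"

definition hopf_ideal :: "'k::field \<Rightarrow> nat \<Rightarrow> nat \<Rightarrow> 'k tel set \<Rightarrow> bool" where
  "hopf_ideal lam r m I \<longleftrightarrow>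
     I \<subseteq> Tcar r m \<and> (\<lambda>_. 0) \<in> I \<and>
     (\<forall>h\<in>I. \<forall>h'\<in>I. (\<lambda>c. h c + h' c) \<in> I) \<and>
     (\<forall>h\<in>I. \<forall>a. (\<lambda>c. a * h c) \<in> I) \<and>
     (\<forall>h\<in>I. \<forall>t\<in>Tcar r m. tmul lam r m t h \<in> I \<and> tmul lam r m h t \<in> I) \<and>
     (\<forall>h\<in>I. teps m h = 0) \<and>
     (\<forall>h\<in>I. tanti lam r m h \<in> I) \<and>
     (\<forall>h\<in>I. tcoprod lam r m h \<in>
        lspan ({ttens u t | u t. u \<in> I \<and> t \<in> Tcar r m} \<union> {ttens t u | u t. u \<in> I \<and> t \<in> Tcar r m}))"

datatype arr = Ar nat | As nat   \<comment> \<open>Ar i = a_i : i -> i+1,  As i = a_i^* : i+1 -> i\<close>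

fun aidx :: "arr \<Rightarrow> nat" where "aidx (Ar i) = i" | "aidx (As i) = i"
fun asrc :: "nat \<Rightarrow> arr \<Rightarrow> nat" where "asrc n (Ar i) = i" | "asrc n (As i) = (i + 1) mod n"
fun atgt :: "nat \<Rightarrow> arr \<Rightarrow> nat" where "atgt n (Ar i) = (i + 1) mod n" | "atgt n (As i) = i"

type_synonym qpath = "nat \<times> arr list"  \<comment> \<open>(source vertex, arrows in order)\<close>

fun pend :: "nat \<Rightarrow> nat \<Rightarrow> arr list \<Rightarrow> nat" where
  "pend n v [] = v"
| "pend n v (a # as) = pend n (atgt n a) as"

fun pvalid :: "nat \<Rightarrow> nat \<Rightarrow> arr list \<Rightarrow> bool" where
  "pvalid n v [] = (v < n)"
| "pvalid n v (a # as) = (v < n \<and> aidx a < n \<and> asrc n a = v \<and> pvalid n (atgt n a) as)"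

definition PA :: "nat \<Rightarrow> (qpath \<Rightarrow> 'k::field) set" where
  "PA n = {f. finite {p. f p \<noteq> 0} \<and> (\<forall>p. f p \<noteq> 0 \<longrightarrow> pvalid n (fst p) (snd p))}"

definition pzero :: "qpath \<Rightarrow> 'k::field" where "pzero = (\<lambda>_. 0)"
definition padd :: "(qpath \<Rightarrow> 'k::field) \<Rightarrow> (qpath \<Rightarrow> 'k) \<Rightarrow> (qpath \<Rightarrow> 'k)" where
  "padd f h = (\<lambda>p. f p + h p)"
definition psub :: "(qpath \<Rightarrow> 'k::field) \<Rightarrow> (qpath \<Rightarrow> 'k) \<Rightarrow> (qpath \<Rightarrow> 'k)" where
  "psub f h = (\<lambda>p. f p - h p)"
definition psmult :: "'k::field \<Rightarrow> (qpath \<Rightarrow> 'k) \<Rightarrow> (qpath \<Rightarrow> 'k)" where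
  "psmult c f = (\<lambda>p. c * f p)"

text \<open>Product: concatenation, p then q, zero if t(p) <> s(q).\<close>
definition pmul :: "nat \<Rightarrow> (qpath \<Rightarrow> 'k::field) \<Rightarrow> (qpath \<Rightarrow> 'k) \<Rightarrow> (qpath \<Rightarrow> 'k)" where
  "pmul n f h = (\<lambda>p. \<Sum>q\<in>{q. f q \<noteq> 0}. \<Sum>q'\<in>{q'. h q' \<noteq> 0}.
      if pend n (fst q) (snd q) = fst q' \<and> (fst q, snd q @ snd q') = p then f q * h q' else 0)"

definition pone :: "nat \<Rightarrow> qpath \<Rightarrow> 'k::field" where
  "pone n = (\<lambda>p. if snd p = [] \<and> fst p < n then 1 else 0)"

text \<open>Vertex idempotent e_i and arrows a_i, a_i^*, indices taken mod n.\<close>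
definition vtx :: "nat \<Rightarrow> nat \<Rightarrow> qpath \<Rightarrow> 'k::field" where
  "vtx n i = (\<lambda>p. if p = (i mod n, []) then 1 else 0)"

definition arrel :: "nat \<Rightarrow> arr \<Rightarrow> qpath \<Rightarrow> 'k::field" where
  "arrel n a = (\<lambda>p. if p = (asrc n a, [a]) then 1 else 0)"

definition arrA :: "nat \<Rightarrow> nat \<Rightarrow> qpath \<Rightarrow> 'k::field" where
  "arrA n i = arrel n (Ar (i mod n))"

definition arrS :: "nat \<Rightarrow> nat \<Rightarrow> qpath \<Rightarrow> 'k::field" where
  "arrS n i = arrel n (As (i mod n))"

definition rho :: "nat \<Rightarrow> nat \<Rightarrow> qpath \<Rightarrow> 'k::field" where
  "rho n i = psub (pmul n (arrS n i) (arrA n i)) (pmul n (arrA n (i + 1)) (arrS n (i + 1)))"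

definition Omega :: "nat \<Rightarrow> (qpath \<Rightarrow> 'k::field) set" where
  "Omega n = lspan {pmul n (pmul n u (rho n i)) v | u v i. u \<in> PA n \<and> v \<in> PA n \<and> i < n}"

text \<open>T-module algebra structure on the path algebra, with g acting by G and x by X.\<close>
definition taft_module_algebra ::
  "nat \<Rightarrow> 'k::field \<Rightarrow> nat \<Rightarrow> nat \<Rightarrow> ((qpath \<Rightarrow> 'k) \<Rightarrow> (qpath \<Rightarrow> 'k)) \<Rightarrow> ((qpath \<Rightarrow> 'k) \<Rightarrow> (qpath \<Rightarrow> 'k)) \<Rightarrow> bool" where
  "taft_module_algebra n lam r m G X \<longleftrightarrow>
     bij_betw G (PA n) (PA n) \<and> (\<forall>w\<in>PA n. X w \<in> PA n) \<and>
     (\<forall>c. \<forall>w\<in>PA n. \<forall>w'\<in>PA n. G (padd (psmult c w) w') = padd (psmult c (G w)) (G w')) \<and>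
     (\<forall>c. \<forall>w\<in>PA n. \<forall>w'\<in>PA n. X (padd (psmult c w) w') = padd (psmult c (X w)) (X w')) \<and>
     (\<forall>w\<in>PA n. \<forall>w'\<in>PA n. G (pmul n w w') = pmul n (G w) (G w')) \<and>
     (\<forall>w\<in>PA n. \<forall>w'\<in>PA n. X (pmul n w w') = padd (pmul n w (X w')) (pmul n (X w) (G w'))) \<and>
     G (pone n) = pone n \<and> X (pone n) = pzero \<and>
     (\<forall>w\<in>PA n. G (X w) = psmult lam (X (G w))) \<and>
     (\<forall>w\<in>PA n. (G ^^ m) w = w) \<and>
     (\<forall>w\<in>PA n. (X ^^ r) w = pzero)"

definition tact :: "nat \<Rightarrow> nat \<Rightarrow> ((qpath \<Rightarrow> 'k) \<Rightarrow> (qpath \<Rightarrow> 'k)) \<Rightarrow> ((qpath \<Rightarrow> 'k) \<Rightarrow> (qpath \<Rightarrow> 'k))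
    \<Rightarrow> 'k::field tel \<Rightarrow> (qpath \<Rightarrow> 'k) \<Rightarrow> (qpath \<Rightarrow> 'k)" where
  "tact r m G X h w = (\<lambda>q. \<Sum>p\<in>TB r m. h p * (G ^^ fst p) ((X ^^ snd p) w) q)"

definition inner_faithful ::
  "nat \<Rightarrow> 'k::field \<Rightarrow> nat \<Rightarrow> nat \<Rightarrow> ((qpath \<Rightarrow> 'k) \<Rightarrow> (qpath \<Rightarrow> 'k)) \<Rightarrow> ((qpath \<Rightarrow> 'k) \<Rightarrow> (qpath \<Rightarrow> 'k)) \<Rightarrow> bool" where
  "inner_faithful n lam r m G X \<longleftrightarrow>
     (\<forall>I. hopf_ideal lam r m I \<and> (\<forall>h\<in>I. \<forall>w\<in>PA n. tact r m G X h w = pzero)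
          \<longrightarrow> (\<forall>h\<in>I. h = (\<lambda>_. 0)))"

definition plen_hom :: "nat \<Rightarrow> (qpath \<Rightarrow> 'k::field) \<Rightarrow> bool" where
  "plen_hom l w \<longleftrightarrow> (\<forall>p. w p \<noteq> 0 \<longrightarrow> length (snd p) = l)"

definition linear_action ::
  "nat \<Rightarrow> ((qpath \<Rightarrow> 'k::field) \<Rightarrow> (qpath \<Rightarrow> 'k)) \<Rightarrow> ((qpath \<Rightarrow> 'k) \<Rightarrow> (qpath \<Rightarrow> 'k)) \<Rightarrow> bool" where
  "linear_action n G X \<longleftrightarrow>
     (\<forall>l. \<forall>w\<in>PA n. plen_hom l w \<longrightarrow> plen_hom l (G w)) \<and>
     (\<forall>i<n. \<forall>p. X (vtx n i) p \<noteq> 0 \<longrightarrow> length (snd p) = 0) \<and>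
     (\<forall>i<n. \<forall>p. X (arrA n i) p \<noteq> 0 \<longrightarrow> length (snd p) \<le> 1) \<and>
     (\<forall>i<n. \<forall>p. X (arrS n i) p \<noteq> 0 \<longrightarrow> length (snd p) \<le> 1)"

definition descends :: "nat \<Rightarrow> ((qpath \<Rightarrow> 'k::field) \<Rightarrow> (qpath \<Rightarrow> 'k)) \<Rightarrow> ((qpath \<Rightarrow> 'k) \<Rightarrow> (qpath \<Rightarrow> 'k)) \<Rightarrow> bool" where
  "descends n G X \<longleftrightarrow> (\<forall>w\<in>Omega n. G w \<in> Omega n \<and> X w \<in> Omega n)"

definition qtaft :: "nat \<Rightarrow> 'k::field \<Rightarrow> ((qpath \<Rightarrow> 'k) \<Rightarrow> (qpath \<Rightarrow> 'k)) \<Rightarrow> ((qpath \<Rightarrow> 'k) \<Rightarrow> (qpath \<Rightarrow> 'k))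
    \<Rightarrow> (nat \<Rightarrow> 'k) \<Rightarrow> arr \<Rightarrow> (qpath \<Rightarrow> 'k)" where
  "qtaft n lam G X gam a = (\<lambda>p. X (arrel n a) p - gam (atgt n a) * arrel n a p
        + gam (asrc n a) * inverse lam * G (arrel n a) p)"

text \<open>Reflection on vertices: i |-> n - (d + i) mod n (written with 2n to avoid nat truncation).\<close>
definition gref :: "nat \<Rightarrow> nat \<Rightarrow> nat \<Rightarrow> nat" where
  "gref n d i = (2 * n - (d + i)) mod n"

end

theory Submission
  imports Defs
begin


lemma pvalid_lt: "pvalid n v l \<Longrightarrow> v < n"
  by (cases l) auto

lemma pvalid_append: "pvalid n v (xs @ ys) \<longleftrightarrow> pvalid n v xs \<and> pvalid n (pend n v xs) ys"
  by (induction xs arbitrary: v) (auto dest: pvalid_lt)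

lemma pvalid_pend: "pvalid n v l \<Longrightarrow> pend n v l < n"
  by (induction l arbitrary: v) auto

lemma PA_fin: "f \<in> PA n \<Longrightarrow> finite {q. f q \<noteq> 0}"
  by (simp add: PA_def)

lemma pmul_conv:
  assumes fa: "finite {q. f q \<noteq> 0}" and fb: "finite {q. h q \<noteq> 0}"
  shows "pmul n f h (s,l) = (\<Sum>k\<le>length l. f (s, take k l) * h (pend n s (take k l), drop k l))"
proof -
  define A where "A = {q. f q \<noteq> 0}"
  define B where "B = {q. h q \<noteq> 0}"
  define C where "C = (\<lambda>(q::qpath,q'::qpath). pend n (fst q) (snd q) = fst q' \<and> (fst q, snd q @ snd q') = (s,l))"
  define F where "F = (\<lambda>(q::qpath,q'::qpath). f q * h q')"
  define \<phi> where "\<phi> = (\<lambda>k. ((s, take k l), (pend n s (take k l), drop k l)))"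
  define K where "K = {..length l}"
  have "pmul n f h (s,l) = (\<Sum>q\<in>A. \<Sum>q'\<in>B. (if C (q,q') then F (q,q') else 0))"
    unfolding pmul_def A_def B_def C_def F_def by (intro sum.cong refl) auto
  also have "\<dots> = (\<Sum>x\<in>A\<times>B. (if C x then F x else 0))"
    by (simp add: sum.cartesian_product)
  also have "\<dots> = (\<Sum>x\<in>\<phi> ` K. (if C x then F x else 0))"
  proof (rule sum.mono_neutral_cong)
    show "finite (A \<times> B)" using fa fb A_def B_def by simp
    show "finite (\<phi> ` K)" using K_def by simp
    show "\<And>i. i \<in> \<phi> ` K - A \<times> B \<Longrightarrow> (if C i then F i else 0) = 0"
      by (auto simp: A_def B_def F_def)
    show "\<And>x. x \<in> A \<times> B - \<phi> ` K \<Longrightarrow> (if C x then F x else 0) = 0"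
    proof -
      fix x assume x: "x \<in> A \<times> B - \<phi> ` K"
      obtain q q' where xq: "x = (q,q')" by (cases x) blast
      have "\<not> C x"
      proof
        assume "C x"
        hence "x = \<phi> (length (snd q))" "length (snd q) \<in> K"
          using xq by (auto simp: C_def \<phi>_def K_def prod_eq_iff)
        thus False using x by blast
      qed
      thus "(if C x then F x else 0) = 0" by simp
    qed
  qed simp
  also have "\<dots> = (\<Sum>x\<in>\<phi> ` K. F x)"
    by (rule sum.cong) (auto simp: C_def \<phi>_def)
  also have "\<dots> = (\<Sum>k\<in>K. F (\<phi> k))"
  proof (rule sum.reindex[unfolded comp_def])
    show "inj_on \<phi> K"
    proof (rule inj_onI)
      fix x y assume "x \<in> K" "y \<in> K" "\<phi> x = \<phi> y"
      hence "length (take x l) = length (take y l)" "x \<le> length l" "y \<le> length l"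
        by (auto simp: \<phi>_def K_def)
      thus "x = y" by simp
    qed
  qed
  finally show ?thesis by (simp add: K_def F_def \<phi>_def)
qed

lemma pmul_nil: "finite {q. f q \<noteq> 0} \<Longrightarrow> finite {q. h q \<noteq> 0} \<Longrightarrow>
   pmul n f h (s,[]) = f (s,[]) * h (s,[])"
  by (simp add: pmul_conv)

lemma pmul_one: "finite {q. f q \<noteq> 0} \<Longrightarrow> finite {q. h q \<noteq> 0} \<Longrightarrow>
   pmul n f h (s,[x]) = f (s,[]) * h (s,[x]) + f (s,[x]) * h (atgt n x,[])"
  by (simp add: pmul_conv)

lemma pmul_two: "finite {q. f q \<noteq> 0} \<Longrightarrow> finite {q. h q \<noteq> 0} \<Longrightarrow>
   pmul n f h (s,[x,y]) = f (s,[]) * h (s,[x,y]) + f (s,[x]) * h (atgt n x,[y]) + f (s,[x,y]) * h (atgt n y,[])"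
  by (simp add: pmul_conv numeral_2_eq_2)

lemma pmul_nz:
  assumes "finite {q. f q \<noteq> 0}" "finite {q. h q \<noteq> 0}" "pmul n f h (s,l) \<noteq> 0"
  shows "\<exists>k\<le>length l. f (s, take k l) \<noteq> 0 \<and> h (pend n s (take k l), drop k l) \<noteq> 0"
proof (rule ccontr)
  assume "\<not> ?thesis"
  hence "pmul n f h (s,l) = 0" by (auto simp: pmul_conv[OF assms(1,2)] intro!: sum.neutral)
  thus False using assms(3) by simp
qed

lemma PA_pmul:
  assumes f: "f \<in> PA n" and h: "h \<in> PA n"
  shows "pmul n f h \<in> PA n"
proof -
  have ff: "finite {q. f q \<noteq> 0}" and fh: "finite {q. h q \<noteq> 0}" using f h by (auto simp: PA_def)
  have sub: "{p. pmul n f h p \<noteq> 0} \<subseteq> (\<lambda>(q,q'). (fst q, snd q @ snd q')) ` ({q. f q \<noteq> 0} \<times> {q. h q \<noteq> 0})"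
  proof
    fix p assume "p \<in> {p. pmul n f h p \<noteq> 0}"
    then obtain s l where p: "p = (s,l)" and nz: "pmul n f h (s,l) \<noteq> 0" by (cases p) auto
    from pmul_nz[OF ff fh nz] obtain k where "f (s, take k l) \<noteq> 0" "h (pend n s (take k l), drop k l) \<noteq> 0" by blast
    thus "p \<in> (\<lambda>(q,q'). (fst q, snd q @ snd q')) ` ({q. f q \<noteq> 0} \<times> {q. h q \<noteq> 0})"
      using p by (intro image_eqI[where x="((s, take k l),(pend n s (take k l), drop k l))"]) auto
  qed
  have fin: "finite {p. pmul n f h p \<noteq> 0}"
    by (rule finite_subset[OF sub]) (use ff fh in simp)
  have val: "pvalid n (fst p) (snd p)" if "pmul n f h p \<noteq> 0" for p
  proof -
    obtain s l where p: "p = (s,l)" by (cases p)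
    from pmul_nz[OF ff fh that[unfolded p]] obtain k where
      k: "f (s, take k l) \<noteq> 0" "h (pend n s (take k l), drop k l) \<noteq> 0" by blast
    have "pvalid n s (take k l)" using k(1) f by (auto simp: PA_def)
    moreover have "pvalid n (pend n s (take k l)) (drop k l)" using k(2) h by (auto simp: PA_def)
    ultimately have "pvalid n s (take k l @ drop k l)" using pvalid_append[of n s "take k l" "drop k l"] by simp
    thus ?thesis using p by simp
  qed
  show ?thesis using fin val unfolding PA_def by fastforce
qed

lemma PA_comb2:
  assumes "f \<in> PA n" "g \<in> PA n" "F 0 0 = 0"
  shows "(\<lambda>p. F (f p) (g p)) \<in> PA n"
proof -
  have "{p. F (f p) (g p) \<noteq> 0} \<subseteq> {p. f p \<noteq> 0} \<union> {p. g p \<noteq> 0}" using assms(3) by auto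
  moreover have "finite ({p. f p \<noteq> 0} \<union> {p. g p \<noteq> 0})" using assms by (simp add: PA_def)
  ultimately show ?thesis using assms unfolding PA_def
    by (auto intro: finite_subset)
qed

lemma PA_comb3:
  assumes "f \<in> PA n" "g \<in> PA n" "h \<in> PA n" "F 0 0 0 = 0"
  shows "(\<lambda>p. F (f p) (g p) (h p)) \<in> PA n"
proof -
  have "{p. F (f p) (g p) (h p) \<noteq> 0} \<subseteq> {p. f p \<noteq> 0} \<union> {p. g p \<noteq> 0} \<union> {p. h p \<noteq> 0}" using assms(4) by auto
  moreover have "finite ({p. f p \<noteq> 0} \<union> {p. g p \<noteq> 0} \<union> {p. h p \<noteq> 0})" using assms by (simp add: PA_def)
  ultimately show ?thesis using assms unfolding PA_def
    by (auto intro: finite_subset)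
qed

lemma PA_padd: "f \<in> PA n \<Longrightarrow> g \<in> PA n \<Longrightarrow> padd f g \<in> PA n"
  unfolding padd_def by (rule PA_comb2) auto
lemma PA_psub: "f \<in> PA n \<Longrightarrow> g \<in> PA n \<Longrightarrow> psub f g \<in> PA n"
  unfolding psub_def by (rule PA_comb2) auto
lemma PA_psmult: "f \<in> PA n \<Longrightarrow> psmult c f \<in> PA n"
  unfolding psmult_def using PA_comb2[of f n f "\<lambda>x y. c * x"] by auto
lemma PA_pzero: "pzero \<in> PA n"
  by (simp add: PA_def pzero_def)

lemma PA_pone: "pone n \<in> PA n"
proof -
  have "{p. pone n p \<noteq> (0::'k::field)} \<subseteq> (\<lambda>s. (s,[])) ` {..<n}"
    by (auto simp: pone_def split: if_splits)
  hence "finite {p. pone n p \<noteq> (0::'k::field)}" by (rule finite_subset) simp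
  thus ?thesis by (auto simp: PA_def pone_def split: if_splits)
qed

lemma PA_single:
  assumes "pvalid n s l"
  shows "(\<lambda>p. if p = (s,l) then 1 else 0) \<in> PA n"
proof -
  have "{p. (if p = (s,l) then 1 else 0) \<noteq> (0::'k::field)} = {(s,l)}" by auto
  thus ?thesis using assms unfolding PA_def by auto
qed

lemma PA_vtx: "0 < n \<Longrightarrow> vtx n i \<in> PA n"
  unfolding vtx_def by (rule PA_single) simp

lemma PA_arrel: "0 < n \<Longrightarrow> aidx a < n \<Longrightarrow> arrel n a \<in> PA n"
  unfolding arrel_def by (rule PA_single) (cases a; simp)

lemma PA_arrA: "0 < n \<Longrightarrow> arrA n i \<in> PA n"
  unfolding arrA_def by (rule PA_arrel) auto

lemma PA_arrS: "0 < n \<Longrightarrow> arrS n i \<in> PA n"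
  unfolding arrS_def by (rule PA_arrel) auto

lemma PA_rho: "0 < n \<Longrightarrow> rho n i \<in> PA n"
  unfolding rho_def by (intro PA_psub PA_pmul PA_arrA PA_arrS)

lemma pone_mul: assumes "f \<in> PA n" shows "pmul n (pone n) f = f"
proof
  fix p :: qpath obtain s l where p: "p = (s,l)" by (cases p)
  have ff: "finite {q. f q \<noteq> 0}" using assms by (simp add: PA_def)
  have f1: "finite {q. pone n q \<noteq> (0::'a)}" using PA_pone PA_fin by blast
  have "pmul n (pone n) f (s,l) = (\<Sum>k\<le>length l. pone n (s, take k l) * f (pend n s (take k l), drop k l))"
    by (rule pmul_conv[OF f1 ff])
  also have "\<dots> = (\<Sum>k\<le>length l. if k = 0 then (if s < n then 1 else 0) * f (s,l) else 0)"
    by (rule sum.cong) (auto simp: pone_def)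
  also have "\<dots> = (if s < n then 1 else 0) * f (s,l)" by simp
  also have "\<dots> = f (s,l)" using assms by (auto simp: PA_def dest: pvalid_lt)
  finally show "pmul n (pone n) f p = f p" using p by simp
qed

lemma mul_pone: assumes "f \<in> PA n" shows "pmul n f (pone n) = f"
proof
  fix p :: qpath obtain s l where p: "p = (s,l)" by (cases p)
  have ff: "finite {q. f q \<noteq> 0}" using assms by (simp add: PA_def)
  have f1: "finite {q. pone n q \<noteq> (0::'a)}" using PA_pone PA_fin by blast
  have "pmul n f (pone n) (s,l) = (\<Sum>k\<le>length l. f (s, take k l) * pone n (pend n s (take k l), drop k l))"
    by (rule pmul_conv[OF ff f1])
  also have "\<dots> = (\<Sum>k\<le>length l. if k = length l then f (s,l) * (if pend n s l < n then 1 else 0) else 0)"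
    by (rule sum.cong) (auto simp: pone_def)
  also have "\<dots> = f (s,l) * (if pend n s l < n then 1 else 0)" by simp
  also have "\<dots> = f (s,l)" using assms by (auto simp: PA_def dest: pvalid_pend)
  finally show "pmul n f (pone n) p = f p" using p by simp
qed

lemma rho_Omega: "0 < n \<Longrightarrow> i < n \<Longrightarrow> rho n i \<in> Omega n"
proof -
  assume n: "0 < n" "i < n"
  have g: "pmul n (pmul n (pone n) (rho n i)) (pone n) \<in> {pmul n (pmul n u (rho n i)) v | u v i. u \<in> PA n \<and> v \<in> PA n \<and> i < n}"
    using n PA_pone by blast
  have "(\<lambda>x. 1 * pmul n (pmul n (pone n) (rho n i)) (pone n) x + 0) \<in> Omega n"
    unfolding Omega_def by (rule lspan.step[OF g lspan.zero])
  thus ?thesis using n by (simp add: pone_mul mul_pone PA_rho)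
qed

lemma arrA_app: "arrA n i p = (if p = (i mod n, [Ar (i mod n)]) then 1 else 0)"
  by (simp add: arrA_def arrel_def)
lemma arrS_app: "arrS n i p = (if p = ((i mod n + 1) mod n, [As (i mod n)]) then 1 else 0)"
  by (simp add: arrS_def arrel_def)
lemma vtx_app: "vtx n i p = (if p = (i mod n, []) then 1 else 0)"
  by (simp add: vtx_def)

lemma fin_arrA: "0 < n \<Longrightarrow> finite {q. arrA n i q \<noteq> (0::'k::field)}"
  using PA_fin PA_arrA by blast
lemma fin_arrS: "0 < n \<Longrightarrow> finite {q. arrS n i q \<noteq> (0::'k::field)}"
  using PA_fin PA_arrS by blast

lemma mod_pred_iff: "0 < (n::nat) \<Longrightarrow> q < n \<Longrightarrow> (i mod n = (q + n - 1) mod n) = ((i + 1) mod n = q)"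
proof -
  assume n: "0 < n" "q < n"
  define a where "a = i mod n"
  have a: "a < n" using n by (simp add: a_def)
  have e: "(i + 1) mod n = (a + 1) mod n" by (simp add: a_def mod_Suc_eq)
  show ?thesis
  proof (cases "q = 0")
    case True
    have "(n - 1) mod n = n - 1" using n by simp
    moreover have "((a + 1) mod n = 0) = (a = n - 1)"
      using a n by (metis Suc_diff_1 Suc_eq_plus1 Suc_lessI diff_add_inverse2
    less_numeral_extra(1) mod_less mod_self not_add_less2)
    ultimately show ?thesis using True e by (simp add: a_def[symmetric])
  next
    case False
    have "(q + n - 1) mod n = q - 1" using n False by (metis Nat.add_diff_assoc add.commute less_imp_diff_less less_one
    mod_add_self1 mod_less verit_comp_simplify1(3))
    moreover have "((a + 1) mod n = q) = (a = q - 1)"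
      using a n False by (metis Suc_diff_1 Suc_eq_plus1 Suc_lessI add_implies_diff mod_if
    mod_self not_gr0)
    ultimately show ?thesis using e by (simp add: a_def[symmetric])
  qed
qed

lemma rho_nil: "0 < n \<Longrightarrow> rho n i (s,[]) = (0::'k::field)"
  by (simp add: rho_def psub_def pmul_nil fin_arrA fin_arrS arrA_app arrS_app)
lemma rho_one: "0 < n \<Longrightarrow> rho n i (s,[x]) = (0::'k::field)"
  by (simp add: rho_def psub_def pmul_one fin_arrA fin_arrS arrA_app arrS_app)
lemma rho_AsAs: "0 < n \<Longrightarrow> rho n i (s,[As a, As b]) = (0::'k::field)"
  by (simp add: rho_def psub_def pmul_two fin_arrA fin_arrS arrA_app arrS_app)

lemma rho_phi:
  assumes "0 < n" "q < n"
  shows "rho n i (q,[As ((q+n-1) mod n), Ar ((q+n-1) mod n)]) + rho n i (q,[Ar q, As q]) = (0::'k::field)"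
proof -
  have h1: "((q + n - 1) mod n + 1) mod n = q"
    using mod_pred_iff[OF assms, of "(q + n - 1) mod n"] by simp
  have "rho n i (q,[As ((q+n-1) mod n), Ar ((q+n-1) mod n)]) = (if i mod n = (q+n-1) mod n then 1 else (0::'k))"
    using assms h1 mod_less_divisor[OF assms(1), of i] by (auto simp: rho_def psub_def pmul_two fin_arrA fin_arrS arrA_app arrS_app)
  moreover have "rho n i (q,[Ar q, As q]) = (if (i+1) mod n = q then -1 else (0::'k))"
    using assms by (auto simp: rho_def psub_def pmul_two fin_arrA fin_arrS arrA_app arrS_app)
  ultimately show ?thesis using mod_pred_iff[OF assms, of i] by simp
qed

lemma gen_vals:
  assumes n: "0 < n" and u: "u \<in> PA n" and v: "v \<in> PA n"
  shows "pmul n (pmul n u (rho n i)) v (s,[]) = (0::'k::field)"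
    and "pmul n (pmul n u (rho n i)) v (s,[x]) = (0::'k::field)"
    and "pmul n (pmul n u (rho n i)) v (s,[x,y]) = u (s,[]) * rho n i (s,[x,y]) * v (atgt n y, [])"
proof -
  have fu: "finite {q. u q \<noteq> 0}" and fv: "finite {q. v q \<noteq> 0}" using u v PA_fin by auto
  have fr: "finite {q. rho n i q \<noteq> 0}" using PA_rho[OF n] PA_fin by blast
  have fur: "finite {q. pmul n u (rho n i) q \<noteq> 0}" using PA_pmul[OF u PA_rho[OF n]] PA_fin by blast
  show "pmul n (pmul n u (rho n i)) v (s,[]) = 0"
    by (simp add: pmul_nil fu fv fr fur rho_nil n)
  show "pmul n (pmul n u (rho n i)) v (s,[x]) = 0"
    by (simp add: pmul_nil pmul_one fu fv fr fur rho_nil rho_one n)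
  show "pmul n (pmul n u (rho n i)) v (s,[x,y]) = u (s,[]) * rho n i (s,[x,y]) * v (atgt n y, [])"
    by (simp add: pmul_nil pmul_one pmul_two fu fv fr fur rho_nil rho_one n)
qed

lemma Omega_induct_lin:
  assumes w: "w \<in> Omega n" and n: "0 < n"
    and L: "\<And>f g c. L (\<lambda>x. c * f x + g x) = c * L f + L g" and L0: "L (\<lambda>_. 0) = 0"
    and gen: "\<And>u v i. u \<in> PA n \<Longrightarrow> v \<in> PA n \<Longrightarrow> i < n \<Longrightarrow> L (pmul n (pmul n u (rho n i)) v) = (0::'k::field)"
  shows "L w = 0"
  using w unfolding Omega_def
proof (induction rule: lspan.induct)
  case zero then show ?case using L0 by simp
next
  case (step v w c)
  then show ?case using L gen by auto
qed

lemma Om_nil: "w \<in> Omega n \<Longrightarrow> 0 < n \<Longrightarrow> w (s,[]) = (0::'k::field)"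
  by (rule Omega_induct_lin[where L="\<lambda>f. f (s,[])"]) (auto simp: gen_vals)
lemma Om_one: "w \<in> Omega n \<Longrightarrow> 0 < n \<Longrightarrow> w (s,[x]) = (0::'k::field)"
  by (rule Omega_induct_lin[where L="\<lambda>f. f (s,[x])"]) (auto simp: gen_vals)
lemma Om_AsAs: "w \<in> Omega n \<Longrightarrow> 0 < n \<Longrightarrow> w (s,[As a, As b]) = (0::'k::field)"
  by (rule Omega_induct_lin[where L="\<lambda>f. f (s,[As a, As b])"]) (auto simp: gen_vals rho_AsAs)
lemma Om_phi:
  assumes "w \<in> Omega n" "0 < n" "q < n"
  shows "w (q,[As ((q+n-1) mod n), Ar ((q+n-1) mod n)]) + w (q,[Ar q, As q]) = (0::'k::field)"
proof (rule Omega_induct_lin[where L="\<lambda>f. f (q,[As ((q+n-1) mod n), Ar ((q+n-1) mod n)]) + f (q,[Ar q, As q])", OF assms(1,2)])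
  fix u v :: "qpath \<Rightarrow> 'k" and i assume uv: "u \<in> PA n" "v \<in> PA n" "i < n"
  have h1: "((q + n - 1) mod n + 1) mod n = q"
    using mod_pred_iff[OF assms(2,3), of "(q + n - 1) mod n"] by simp
  have "pmul n (pmul n u (rho n i)) v (q,[As ((q+n-1) mod n), Ar ((q+n-1) mod n)]) + pmul n (pmul n u (rho n i)) v (q,[Ar q, As q])
     = u (q,[]) * (rho n i (q,[As ((q+n-1) mod n), Ar ((q+n-1) mod n)]) + rho n i (q,[Ar q, As q])) * v (q, [])"
    using assms h1 uv by (simp add: gen_vals algebra_simps)
  also have "\<dots> = 0" by (subst rho_phi[OF assms(2,3)]) simp
  finally show "pmul n (pmul n u (rho n i)) v (q,[As ((q+n-1) mod n), Ar ((q+n-1) mod n)]) + pmul n (pmul n u (rho n i)) v (q,[Ar q, As q]) = 0" .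
qed (auto simp: algebra_simps)




lemma lin_facts:
  assumes lin: "\<forall>c. \<forall>w\<in>PA n. \<forall>w'\<in>PA n. F (padd (psmult c w) w') = padd (psmult c (F w)) (F w')"
  shows "F pzero = (pzero :: qpath \<Rightarrow> 'k::field)"
    and "w \<in> PA n \<Longrightarrow> F (psmult c w) = psmult c (F w)"
    and "w \<in> PA n \<Longrightarrow> w' \<in> PA n \<Longrightarrow> F (padd w w') = padd (F w) (F w')"
    and "w \<in> PA n \<Longrightarrow> w' \<in> PA n \<Longrightarrow> F (psub w w') = psub (F w) (F w')"
proof -
  have e0: "padd (psmult 1 pzero) pzero = (pzero :: qpath \<Rightarrow> 'k)"
    by (simp add: padd_def psmult_def pzero_def)
  have "F pzero = padd (psmult 1 (F pzero)) (F pzero)"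
    using lin PA_pzero e0 by metis
  hence "\<And>p. F pzero p = F pzero p + F pzero p" by (metis padd_def psmult_def mult_1)
  hence "\<And>p. F pzero p = 0" by (metis add_cancel_left_right)
  thus z: "F pzero = pzero" by (auto simp: pzero_def)
  assume w: "w \<in> PA n"
  have "psmult c w = padd (psmult c w) pzero" by (simp add: padd_def psmult_def pzero_def)
  hence "F (psmult c w) = padd (psmult c (F w)) pzero" using lin w PA_pzero z by metis
  thus "F (psmult c w) = psmult c (F w)" by (simp add: padd_def psmult_def pzero_def)
  assume w': "w' \<in> PA n"
  have "padd w w' = padd (psmult 1 w) w'" by (simp add: padd_def psmult_def)
  hence "F (padd w w') = padd (psmult 1 (F w)) (F w')" using lin w w' by metis
  thus "F (padd w w') = padd (F w) (F w')" by (simp add: padd_def psmult_def)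
  have "psub w w' = padd (psmult (-1) w') w" by (auto simp: padd_def psmult_def psub_def)
  hence "F (psub w w') = padd (psmult (-1) (F w')) (F w)" using lin w w' by metis
  thus "F (psub w w') = psub (F w) (F w')" by (auto simp: padd_def psmult_def psub_def)
qed

lemma mod_pred: "0 < (n::nat) \<Longrightarrow> 1 \<le> x \<Longrightarrow> (x - 1) mod n = (x mod n + n - 1) mod n"
proof -
  assume "0 < n" "1 \<le> x"
  have "(x - 1) mod n = ((x - 1) + n) mod n" by simp
  also have "(x - 1) + n = x + (n - 1)" using \<open>0<n\<close> \<open>1 \<le> x\<close> by simp
  also have "(x + (n - 1)) mod n = (x mod n + (n - 1)) mod n" by (simp add: mod_add_left_eq)
  also have "x mod n + (n - 1) = x mod n + n - 1" using \<open>0<n\<close> by simp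
  finally show ?thesis .
qed

lemma arith_a1: "0 < (n::nat) \<Longrightarrow> j < n \<Longrightarrow> d < n \<Longrightarrow> (2*n-(d+j)) mod n = j \<Longrightarrow>
   (2*n-(d+j+1)) mod n = (j+n-1) mod n"
proof -
  assume a: "0 < n" "j < n" "d < n" "(2*n-(d+j)) mod n = j"
  have "1 \<le> 2 * n - (d + j)" using a by linarith
  from mod_pred[OF a(1) this] have "(2 * n - (d + j) - 1) mod n = ((2*n-(d+j)) mod n + n - 1) mod n" .
  moreover have "2 * n - (d + j) - 1 = 2*n-(d+j+1)" by simp
  ultimately show ?thesis using a(4) by simp
qed

lemma arith_a2: "0 < (n::nat) \<Longrightarrow> j < n \<Longrightarrow> d < n \<Longrightarrow> (2*n-(d+j)) mod n = j \<Longrightarrow>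
   (2*n-(d+(j+n-1) mod n+1)) mod n = j"
proof -
  assume a: "0 < n" "j < n" "d < n" "(2*n-(d+j)) mod n = j"
  show ?thesis
  proof (cases "j = 0")
    case True
    have jm: "(j+n-1) mod n = n - 1" using a True by simp
    have e: "2*n-(d+(n-1)+1) = n - d" using a by linarith
    have e2: "2*n-(d+j) = (n-d)+n" using a True by linarith
    have h: "((n - d) + n) mod n = 0" using a(4) True e2 by simp
    hence h2: "(n - d) mod n = 0" by (simp only: mod_add_self2)
    show ?thesis unfolding jm e using h2 True by simp
  next
    case False
    have e1: "j + n - 1 = (j - 1) + n" using False by linarith
    have "(j+n-1) mod n = ((j - 1) + n) mod n" by (simp only: e1)
    also have "\<dots> = (j - 1) mod n" by (simp only: mod_add_self2)
    also have "\<dots> = j - 1" using a(2) by (intro mod_less) linarith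
    finally have jm: "(j+n-1) mod n = j - 1" .
    have e: "2 * n - (d + (j - 1) + 1) = 2 * n - (d + j)" using False by linarith
    show ?thesis unfolding jm e using a(4) .
  qed
qed

lemma arith_k: "0 < (n::nat) \<Longrightarrow> k < n \<Longrightarrow> d < n \<Longrightarrow> (2*n-(d+k)) mod n = (k+1) mod n \<Longrightarrow>
   (2*n-(d+k+1)) mod n = k"
proof -
  assume a: "0 < n" "k < n" "d < n" "(2*n-(d+k)) mod n = (k+1) mod n"
  have "1 \<le> 2 * n - (d + k)" using a by linarith
  from mod_pred[OF a(1) this] have "(2 * n - (d + k) - 1) mod n = ((2*n-(d+k)) mod n + n - 1) mod n" .
  moreover have "2 * n - (d + k) - 1 = 2*n-(d+k+1)" by simp
  moreover have "((k+1) mod n + n - 1) mod n = k"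
  proof (cases "k + 1 = n")
    case True thus ?thesis by simp
  next
    case False
    hence "(k+1) mod n = k + 1" using a by simp
    thus ?thesis using a by simp
  qed
  ultimately show ?thesis using a(4) by simp
qed

lemma alg1:
  fixes lam cj cjs a b mj msj mjm msjm :: "'k::field"
  assumes A: "cjs * msj = lam * (msj * a)" and B: "cj * msjm = lam * (mj * b)" and c: "cjs * mj = - cj"
    and k: "mjm * msjm = mj * msj" and E: "a - cj * msj + b * mjm - cjs = 0"
    and l1: "lam \<noteq> 1" and cj: "cj \<noteq> 0" and ms: "msj \<noteq> 0"
  shows "mj * msj = 1"
proof -
  have a1: "cjs = lam * a" using A ms by (metis mult.commute mult.left_commute mult_cancel_left)
  have "cj * (mj * msj - 1) * (1 - lam) = lam * mj * (a - cj * msj + b * mjm - cjs)"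
    using a1 B c k by algebra
  also have "\<dots> = 0" using E by simp
  finally have "cj * (mj * msj - 1) * (1 - lam) = 0" .
  hence "mj * msj - 1 = 0" using cj l1 by simp
  thus ?thesis by simp
qed

locale qsetup =
  fixes lam :: "'k::field" and r m n d :: nat
    and G X :: "(qpath \<Rightarrow> 'k) \<Rightarrow> (qpath \<Rightarrow> 'k)"
    and mu mus gam :: "nat \<Rightarrow> 'k"
  assumes n3: "3 \<le> n" and dn: "d < n" and lam1: "lam \<noteq> 1" and lam0: "lam \<noteq> 0"
    and tma: "taft_module_algebra n lam r m G X"
    and munz: "\<forall>i<n. mu i \<noteq> 0 \<and> mus i \<noteq> 0"
    and Gv: "\<forall>i<n. G (vtx n i) = vtx n (gref n d i)"
    and GA: "\<forall>i<n. G (arrA n i) = psmult (mu i) (arrS n (2 * n - (d + i + 1)))"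
    and GS: "\<forall>i<n. G (arrS n i) = psmult (mus i) (arrA n (2 * n - (d + i + 1)))"
    and desc: "descends n G X"
    and Xv: "\<forall>i<n. X (vtx n i) = psub (psmult (gam i) (vtx n i))
                                    (psmult (gam i * inverse lam) (vtx n (gref n d i)))"
begin

lemma n0: "0 < n" using n3 by simp

lemma G_PA: "w \<in> PA n \<Longrightarrow> G w \<in> PA n"
  using tma unfolding taft_module_algebra_def bij_betw_def by auto
lemma X_PA: "w \<in> PA n \<Longrightarrow> X w \<in> PA n"
  using tma unfolding taft_module_algebra_def by auto
lemma G_fin: "w \<in> PA n \<Longrightarrow> finite {q. G w q \<noteq> 0}" using G_PA PA_fin by blast
lemma X_fin: "w \<in> PA n \<Longrightarrow> finite {q. X w q \<noteq> 0}" using X_PA PA_fin by blast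

lemma Glin: "\<forall>c. \<forall>w\<in>PA n. \<forall>w'\<in>PA n. G (padd (psmult c w) w') = padd (psmult c (G w)) (G w')"
  using tma unfolding taft_module_algebra_def by auto
lemma Xlin: "\<forall>c. \<forall>w\<in>PA n. \<forall>w'\<in>PA n. X (padd (psmult c w) w') = padd (psmult c (X w)) (X w')"
  using tma unfolding taft_module_algebra_def by auto

lemmas Gl = lin_facts[OF Glin]
lemmas Xl = lin_facts[OF Xlin]

lemma G_mul: "w \<in> PA n \<Longrightarrow> w' \<in> PA n \<Longrightarrow> G (pmul n w w') = pmul n (G w) (G w')"
  using tma unfolding taft_module_algebra_def by auto
lemma X_mul: "w \<in> PA n \<Longrightarrow> w' \<in> PA n \<Longrightarrow> X (pmul n w w') = padd (pmul n w (X w')) (pmul n (X w) (G w'))"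
  using tma unfolding taft_module_algebra_def by auto
lemma GX: "w \<in> PA n \<Longrightarrow> G (X w) = psmult lam (X (G w))"
  using tma unfolding taft_module_algebra_def by auto

lemma G_Om: "w \<in> Omega n \<Longrightarrow> G w \<in> Omega n" using desc by (simp add: descends_def)
lemma X_Om: "w \<in> Omega n \<Longrightarrow> X w \<in> Omega n" using desc by (simp add: descends_def)

lemmas PAs = PA_arrA[OF n0] PA_arrS[OF n0] PA_vtx[OF n0] PA_rho[OF n0]
lemmas fins = fin_arrA[OF n0] fin_arrS[OF n0]

lemma GA': "G (arrA n i) = psmult (mu (i mod n)) (arrS n (2 * n - (d + i mod n + 1)))"
proof -
  have "arrA n i = arrA n (i mod n)" by (simp add: arrA_def)
  moreover have "i mod n < n" using n0 by simp
  ultimately show ?thesis using GA by metis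
qed
lemma GS': "G (arrS n i) = psmult (mus (i mod n)) (arrA n (2 * n - (d + i mod n + 1)))"
proof -
  have "arrS n i = arrS n (i mod n)" by (simp add: arrS_def)
  moreover have "i mod n < n" using n0 by simp
  ultimately show ?thesis using GS by metis
qed

lemma kappa_step:
  assumes i: "i + 1 < n"
  shows "mu i * mus i = mu (i+1) * mus (i+1)"
proof -
  define x where "x = 2 * n - (d + i + 1)"
  define q where "q = x mod n"
  have x1: "1 \<le> x" using i dn by (simp add: x_def)
  have x2: "2 * n - (d + (i + 1) + 1) = x - 1" using x_def by simp
  have q: "q < n" using n0 by (simp add: q_def)
  have q': "(x - 1) mod n = (q + n - 1) mod n" using mod_pred[OF n0 x1] q_def by simp
  have hq: "((q + n - 1) mod n + 1) mod n = q"
    using mod_pred_iff[OF n0 q, of "(q + n - 1) mod n"] by simp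
  have w: "G (rho n i) \<in> Omega n" by (intro G_Om rho_Omega[OF n0]) (use i in simp)
  have e: "G (rho n i) = psub (pmul n (psmult (mus i) (arrA n x)) (psmult (mu i) (arrS n x)))
                (pmul n (psmult (mu (i+1)) (arrS n (x-1))) (psmult (mus (i+1)) (arrA n (x-1))))"
    unfolding rho_def using i
    by (simp add: Gl(4) G_mul PA_pmul PAs GA' GS' x_def x2[symmetric])
  have fs: "finite {q. psmult c (arrA n y) q \<noteq> 0}" "finite {q. psmult c (arrS n y) q \<noteq> 0}" for c y
    using PA_psmult PAs PA_fin by blast+
  have "G (rho n i) (q,[As ((q+n-1) mod n), Ar ((q+n-1) mod n)]) + G (rho n i) (q,[Ar q, As q]) = 0"
    by (rule Om_phi[OF w n0 q])
  hence "mus i * mu i - mu (i+1) * mus (i+1) = 0"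
    unfolding e using hq q' q
    by (simp add: psub_def psmult_def pmul_two fs arrA_app arrS_app q_def[symmetric])
  thus ?thesis by (simp add: algebra_simps)
qed

lemma kappa_all: "i < n \<Longrightarrow> mu i * mus i = mu 0 * mus 0"
proof (induction i)
  case (Suc i) thus ?case using kappa_step[of i] by simp
qed simp

lemma vtx_sq: "pmul n (vtx n i) (vtx n i) = (vtx n i :: qpath \<Rightarrow> 'k)"
proof
  fix p :: qpath
  obtain s l where p: "p = (s,l)" by (cases p)
  have f: "finite {q. vtx n i q \<noteq> (0::'k)}" using PA_vtx[OF n0] PA_fin by blast
  show "pmul n (vtx n i) (vtx n i) p = (vtx n i p :: 'k)"
  proof (cases l)
    case Nil thus ?thesis using p by (simp add: pmul_nil f vtx_app)
  next
    case (Cons x xs)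
    have "pmul n (vtx n i) (vtx n i) (s,l) = (\<Sum>k\<le>length l. vtx n i (s, take k l) * vtx n i (pend n s (take k l), drop k l) :: 'k)"
      by (rule pmul_conv[OF f f])
    also have "\<dots> = 0"
    proof (rule sum.neutral, rule ballI)
      fix k assume "k \<in> {..length l}"
      show "vtx n i (s, take k l) * vtx n i (pend n s (take k l), drop k l) = (0::'k)"
        using Cons by (cases k) (auto simp: vtx_app)
    qed
    finally show ?thesis using p Cons by (simp add: vtx_app)
  qed
qed

lemma arrS_mod: "arrS n (y mod n) = arrS n y" by (simp add: arrS_def)
lemma arrA_mod: "arrA n (y mod n) = arrA n y" by (simp add: arrA_def)

lemma Xarrel: "X (arrel n a) p = qtaft n lam G X gam a p + gam (atgt n a) * arrel n a p
     - gam (asrc n a) * inverse lam * G (arrel n a) p"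
  by (simp add: qtaft_def)

lemma fs: "finite {q. psmult c (arrA n y) q \<noteq> (0::'k)}" "finite {q. psmult c (arrS n y) q \<noteq> (0::'k)}"
  using PA_psmult PAs PA_fin by blast+

lemma lam_inv1: "inverse lam \<noteq> 1" using lam1 by (metis inverse_1 inverse_inverse_eq)

lemma partI:
  assumes j: "j < n" and gj: "gref n d j = j"
    and qA: "qtaft n lam G X gam (Ar j) = psmult cj (arrS n (j + n - 1))"
    and qS: "qtaft n lam G X gam (As j) = psmult cjs (arrS n j)"
  shows "cjs = - inverse (mu j) * cj \<and> (cj \<noteq> 0 \<longrightarrow> (\<forall>i<n. mu i * mus i = 1))"
proof -
  define jm where "jm = (j + n - 1) mod n"
  define jp where "jp = (j + 1) mod n"
  have jm: "jm < n" using n0 by (simp add: jm_def)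
  have jmm: "jm mod n = (j + n - 1) mod n" using jm by (simp add: jm_def)
  have a3: "(jm + 1) mod n = j" using mod_pred_iff[OF n0 j, of jm] jmm by simp
  have a3': "Suc jm mod n = j" using a3 by simp
  have xj: "(2 * n - (d + j)) mod n = j" using gj by (simp add: gref_def)
  have a1: "(2 * n - (d + j + 1)) mod n = jm"
    unfolding jm_def by (rule arith_a1[OF n0 j dn xj])
  have a2: "(2 * n - (d + jm + 1)) mod n = j"
    unfolding jm_def by (rule arith_a2[OF n0 j dn xj])
  have r1: "arrS n (2 * n - (d + j + 1)) = (arrS n jm :: qpath \<Rightarrow> 'k)" by (metis a1 arrS_mod)
  have r2: "arrA n (2 * n - (d + j + 1)) = (arrA n jm :: qpath \<Rightarrow> 'k)" by (metis a1 arrA_mod)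
  have r3: "arrS n (2 * n - (d + jm + 1)) = (arrS n j :: qpath \<Rightarrow> 'k)" by (metis a2 arrS_mod)
  have r4: "arrA n (2 * n - (d + jm + 1)) = (arrA n j :: qpath \<Rightarrow> 'k)" by (metis a2 arrA_mod)
  have GAj: "G (arrA n j) = psmult (mu j) (arrS n jm)"
    using GA'[of j] mod_less[OF j] r1 by metis
  have GSj: "G (arrS n j) = psmult (mus j) (arrA n jm)"
    using GS'[of j] mod_less[OF j] r2 by metis
  have GAjm: "G (arrA n jm) = psmult (mu jm) (arrS n j)"
    using GA'[of jm] mod_less[OF jm] r3 by metis
  have GSjm: "G (arrS n jm) = psmult (mus jm) (arrA n j)"
    using GS'[of jm] mod_less[OF jm] r4 by metis
  have AJ: "arrA n j = (arrel n (Ar j) :: qpath \<Rightarrow> 'k)" using j by (simp add: arrA_def)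
  have SJ: "arrS n j = (arrel n (As j) :: qpath \<Rightarrow> 'k)" using j by (simp add: arrS_def)
  have Sjm: "arrS n (j + n - 1) = (arrS n jm :: qpath \<Rightarrow> 'k)" by (simp add: jm_def arrS_mod)
  have XAj: "X (arrA n j) p = cj * arrS n jm p + gam jp * arrA n j p - gam j * inverse lam * (mu j * arrS n jm p)" for p
  proof -
    have "X (arrA n j) p = X (arrel n (Ar j)) p" using AJ by simp
    also have "\<dots> = qtaft n lam G X gam (Ar j) p + gam jp * arrel n (Ar j) p - gam j * inverse lam * G (arrel n (Ar j)) p"
      by (simp add: Xarrel jp_def)
    also have "\<dots> = cj * arrS n jm p + gam jp * arrA n j p - gam j * inverse lam * (mu j * arrS n jm p)"
      unfolding qA AJ[symmetric] GAj Sjm psmult_def by simp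
    finally show ?thesis .
  qed
  have XSj: "X (arrS n j) p = cjs * arrS n j p + gam j * arrS n j p - gam jp * inverse lam * (mus j * arrA n jm p)" for p
  proof -
    have "X (arrS n j) p = X (arrel n (As j)) p" using SJ by simp
    also have "\<dots> = qtaft n lam G X gam (As j) p + gam j * arrel n (As j) p - gam jp * inverse lam * G (arrel n (As j)) p"
      by (simp add: Xarrel jp_def)
    also have "\<dots> = cjs * arrS n j p + gam j * arrS n j p - gam jp * inverse lam * (mus j * arrA n jm p)"
      unfolding qS SJ[symmetric] GSj psmult_def by simp
    finally show ?thesis .
  qed
  have g0: "gam j = 0"
  proof -
    have Gv: "G (vtx n j) = vtx n j" using Gv j gj by simp
    have "X (vtx n j) = padd (pmul n (vtx n j) (X (vtx n j))) (pmul n (X (vtx n j)) (vtx n j))"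
      using X_mul[OF PAs(3) PAs(3), of j j] vtx_sq Gv by simp
    hence h: "X (vtx n j) (j,[]) = pmul n (vtx n j) (X (vtx n j)) (j,[]) + pmul n (X (vtx n j)) (vtx n j) (j,[])"
      by (metis padd_def)
    have f: "finite {q. vtx n j q \<noteq> (0::'k)}" using PAs(3) PA_fin by blast
    have h1: "pmul n (vtx n j) (X (vtx n j)) (j,[]) = X (vtx n j) (j,[])"
      using j by (simp add: pmul_nil X_fin PAs f vtx_app)
    have h2: "pmul n (X (vtx n j)) (vtx n j) (j,[]) = X (vtx n j) (j,[])"
      using j by (simp add: pmul_nil X_fin PAs f vtx_app)
    have "X (vtx n j) (j,[]) = X (vtx n j) (j,[]) + X (vtx n j) (j,[])"
      using h unfolding h1 h2 .
    hence "X (vtx n j) (j,[]) = 0" by (metis add_cancel_left_right)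
    hence "gam j - gam j * inverse lam = 0" using Xv j gj by (simp add: psub_def psmult_def vtx_app)
    hence "gam j * (1 - inverse lam) = 0" by (simp add: algebra_simps)
    thus ?thesis using lam_inv1 by simp
  qed
  have w1: "X (rho n j) \<in> Omega n" using X_Om rho_Omega[OF n0 j] by blast
  have e1: "X (rho n j) = psub (padd (pmul n (arrS n j) (X (arrA n j))) (pmul n (X (arrS n j)) (G (arrA n j))))
      (padd (pmul n (arrA n (j+1)) (X (arrS n (j+1)))) (pmul n (X (arrA n (j+1))) (G (arrS n (j+1)))))"
    unfolding rho_def by (simp add: Xl(4) X_mul PA_pmul PAs)
  have "X (rho n j) (jp, [As j, As jm]) = 0" by (rule Om_AsAs[OF w1 n0])
  hence h: "cj + cjs * mu j = 0"
    unfolding e1 GAj GS'[of "j+1"] using j jm a3 a3' g0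
    by (simp add: psub_def padd_def pmul_two X_fin G_fin PAs fs fins)
       (simp add: arrA_app arrS_app XAj XSj psmult_def jp_def)
  have muj: "mu j \<noteq> 0" using munz j by simp
  have h2: "cjs * mu j = - cj" using h by (simp add: add_eq_0_iff)
  have "cjs = cjs * mu j * inverse (mu j)" using muj by simp
  also have "\<dots> = - inverse (mu j) * cj" unfolding h2 by simp
  finally have c1: "cjs = - inverse (mu j) * cj" .
  show ?thesis
  proof (intro conjI c1 impI)
    assume cj: "cj \<noteq> 0"
    have XAjf: "X (arrA n j) = padd (psmult cj (arrS n jm)) (psmult (gam jp) (arrA n j))"
      by (rule ext) (simp add: XAj padd_def psmult_def g0)
    have XSjf: "X (arrS n j) = padd (psmult cjs (arrS n j)) (psmult (- gam jp * inverse lam * mus j) (arrA n jm))"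
      by (rule ext) (simp add: XSj padd_def psmult_def g0)
    have "G (X (arrA n j)) = psmult lam (X (G (arrA n j)))" by (rule GX[OF PAs(1)])
    hence EB: "padd (psmult cj (psmult (mus jm) (arrA n j))) (psmult (gam jp) (psmult (mu j) (arrS n jm)))
         = psmult lam (psmult (mu j) (X (arrS n jm)))"
      unfolding XAjf GAj by (simp add: Gl(3) Gl(2) Xl(2) PA_psmult PAs GAj GSjm)
    have B: "cj * mus jm = lam * (mu j * X (arrS n jm) (j,[Ar j]))"
      using fun_cong[OF EB, of "(j,[Ar j])"] j jm a3' by (simp add: padd_def psmult_def arrA_app arrS_app)
    have "G (X (arrS n j)) = psmult lam (X (G (arrS n j)))" by (rule GX[OF PAs(2)])
    hence EA: "padd (psmult cjs (psmult (mus j) (arrA n jm))) (psmult (- gam jp * inverse lam * mus j) (psmult (mu jm) (arrS n j)))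
         = psmult lam (psmult (mus j) (X (arrA n jm)))"
      unfolding XSjf GSj by (simp add: Gl(3) Gl(2) Xl(2) PA_psmult PAs GSj GAjm)
    have A: "cjs * mus j = lam * (mus j * X (arrA n jm) (jm,[Ar jm]))"
      using fun_cong[OF EA, of "(jm,[Ar jm])"] j jm a3' by (simp add: padd_def psmult_def arrA_app arrS_app)
    have AjA: "arrA n (jm + 1) = (arrA n j :: qpath \<Rightarrow> 'k)" by (metis a3 arrA_mod)
    have AjS: "arrS n (jm + 1) = (arrS n j :: qpath \<Rightarrow> 'k)" by (metis a3 arrS_mod)
    have w2: "X (rho n jm) \<in> Omega n" using X_Om rho_Omega[OF n0 jm] by blast
    have e2: "X (rho n jm) = psub (padd (pmul n (arrS n jm) (X (arrA n jm))) (pmul n (X (arrS n jm)) (G (arrA n jm))))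
      (padd (pmul n (arrA n j) (X (arrS n j))) (pmul n (X (arrA n j)) (G (arrS n j))))"
      unfolding rho_def AjA AjS by (simp add: Xl(4) X_mul PA_pmul PAs)
    have "X (rho n jm) (j,[As jm, Ar jm]) + X (rho n jm) (j,[Ar j, As j]) = 0"
      using Om_phi[OF w2 n0 j, folded jm_def] .
    hence E: "X (arrA n jm) (jm,[Ar jm]) - cj * mus j + X (arrS n jm) (j,[Ar j]) * mu jm - cjs = 0"
      unfolding e2 GAjm GSj using j jm a3' g0
      by (simp add: psub_def padd_def pmul_two X_fin G_fin PAs fs fins)
         (simp add: arrA_app arrS_app XAj XSj psmult_def jp_def algebra_simps)
    have kj: "mu jm * mus jm = mu j * mus j" using kappa_all[OF jm] kappa_all[OF j] by simp
    have msj: "mus j \<noteq> 0" using munz j by simp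
    have K: "mu j * mus j = 1" by (rule alg1[OF A B h2 kj E lam1 cj msj])
    show "\<forall>i<n. mu i * mus i = 1" using kappa_all K kappa_all[OF j] by simp
  qed
qed

lemma qt_PA: "aidx a < n \<Longrightarrow> qtaft n lam G X gam a \<in> PA n"
proof -
  assume a: "aidx a < n"
  have "(\<lambda>p. (\<lambda>x y z. x - gam (atgt n a) * y + gam (asrc n a) * inverse lam * z)
          (X (arrel n a) p) (arrel n a p) (G (arrel n a) p)) \<in> PA n"
    by (rule PA_comb3) (auto intro: X_PA G_PA PA_arrel[OF n0 a])
  thus ?thesis by (simp add: qtaft_def)
qed
lemma qt_fin: "aidx a < n \<Longrightarrow> finite {q. qtaft n lam G X gam a q \<noteq> 0}"
  using qt_PA PA_fin by blast
lemma fsv: "finite {q. psmult c (vtx n y) q \<noteq> (0::'k)}"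
  using PA_psmult PAs PA_fin by blast

lemma partII:
  assumes k: "k < n" and gk: "gref n d k = (k + 1) mod n"
    and qA: "qtaft n lam G X gam (Ar k) = psmult ck (vtx n k)"
    and qS: "qtaft n lam G X gam (As k) = psmult cks (vtx n (k + 1))"
    and H: "\<forall>i<n. psub (padd (pmul n (arrS n i) (qtaft n lam G X gam (Ar i)))
                           (pmul n (qtaft n lam G X gam (As i)) (G (arrA n i))))
                     (padd (pmul n (arrA n (i + 1)) (qtaft n lam G X gam (As ((i + 1) mod n))))
                           (pmul n (qtaft n lam G X gam (Ar ((i + 1) mod n))) (G (arrS n (i + 1)))))
                 \<in> Omega n"
  shows "ck = - mu k * cks \<and> (ck \<noteq> 0 \<longrightarrow> lam = -1 \<and> (\<forall>i<n. mu i * mus i = 1))"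
proof -
  define km where "km = (k + n - 1) mod n"
  define kp where "kp = (k + 1) mod n"
  have km: "km < n" using n0 by (simp add: km_def)
  have kp: "kp < n" using n0 by (simp add: kp_def)
  have kmm: "km mod n = (k + n - 1) mod n" using km by (simp add: km_def)
  have b3: "(km + 1) mod n = k" using mod_pred_iff[OF n0 k, of km] kmm by simp
  have b3': "Suc km mod n = k" using b3 by simp
  have xk: "(2 * n - (d + k)) mod n = (k + 1) mod n" using gk by (simp add: gref_def)
  have b1: "(2 * n - (d + k + 1)) mod n = k" by (rule arith_k[OF n0 k dn xk])
  have r1: "arrS n (2 * n - (d + k + 1)) = (arrS n k :: qpath \<Rightarrow> 'k)" by (metis b1 arrS_mod)
  have r2: "arrA n (2 * n - (d + k + 1)) = (arrA n k :: qpath \<Rightarrow> 'k)" by (metis b1 arrA_mod)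
  have GAk: "G (arrA n k) = psmult (mu k) (arrS n k)"
    using GA'[of k] mod_less[OF k] r1 by metis
  have GSk: "G (arrS n k) = psmult (mus k) (arrA n k)"
    using GS'[of k] mod_less[OF k] r2 by metis
  have Gvk: "G (vtx n k) = vtx n kp" using Gv k gk by (simp add: kp_def)
  have ak: "aidx (Ar k) < n" "aidx (As k) < n" "aidx (Ar km) < n" "aidx (As km) < n"
     "aidx (Ar kp) < n" "aidx (As kp) < n" using k km kp by auto
  have kp': "(k + 1) mod n = kp" "Suc k mod n = kp" by (simp_all add: kp_def)
  have Hk: "psub (padd (pmul n (arrS n k) (qtaft n lam G X gam (Ar k)))
                           (pmul n (qtaft n lam G X gam (As k)) (G (arrA n k))))
                     (padd (pmul n (arrA n (k + 1)) (qtaft n lam G X gam (As kp)))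
                           (pmul n (qtaft n lam G X gam (Ar kp)) (G (arrS n (k + 1)))))
                 \<in> Omega n" using H k by (simp add: kp_def)
  have "psub (padd (pmul n (arrS n k) (qtaft n lam G X gam (Ar k)))
                           (pmul n (qtaft n lam G X gam (As k)) (G (arrA n k))))
                     (padd (pmul n (arrA n (k + 1)) (qtaft n lam G X gam (As kp)))
                           (pmul n (qtaft n lam G X gam (Ar kp)) (G (arrS n (k + 1))))) (kp, [As k]) = 0"
    by (rule Om_one[OF Hk n0])
  hence h1: "ck + cks * mu k = 0"
    unfolding GAk GS'[of "k+1"] qA qS using k kp' kp
    by (simp add: psub_def padd_def pmul_one qt_fin ak fsv fs fins)
       (simp add: arrA_app arrS_app vtx_app psmult_def)
  have c1: "ck = - mu k * cks" using h1 by (simp add: add_eq_0_iff mult.commute)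
  show ?thesis
  proof (intro conjI c1 impI)
    assume ck: "ck \<noteq> 0"
    have AkA: "arrA n (km + 1) = (arrA n k :: qpath \<Rightarrow> 'k)" by (metis b3 arrA_mod)
    have AkS: "arrS n (km + 1) = (arrS n k :: qpath \<Rightarrow> 'k)" by (metis b3 arrS_mod)
    have Hkm: "psub (padd (pmul n (arrS n km) (qtaft n lam G X gam (Ar km)))
                           (pmul n (qtaft n lam G X gam (As km)) (G (arrA n km))))
                     (padd (pmul n (arrA n k) (qtaft n lam G X gam (As k)))
                           (pmul n (qtaft n lam G X gam (Ar k)) (G (arrS n k))))
                 \<in> Omega n" using H[rule_format, OF km] unfolding b3 AkA AkS .
    have "psub (padd (pmul n (arrS n km) (qtaft n lam G X gam (Ar km)))
                           (pmul n (qtaft n lam G X gam (As km)) (G (arrA n km))))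
                     (padd (pmul n (arrA n k) (qtaft n lam G X gam (As k)))
                           (pmul n (qtaft n lam G X gam (Ar k)) (G (arrS n k)))) (k, [Ar k]) = 0"
      by (rule Om_one[OF Hkm n0])
    hence h2: "cks + ck * mus k = 0"
      unfolding GSk GA'[of km] qA qS using k kp' kp km b3'
      by (simp add: psub_def padd_def pmul_one qt_fin ak fsv fs fins)
         (simp add: arrA_app arrS_app vtx_app psmult_def)
    have AK: "arrA n k = (arrel n (Ar k) :: qpath \<Rightarrow> 'k)" using k by (simp add: arrA_def)
    have SK: "arrS n k = (arrel n (As k) :: qpath \<Rightarrow> 'k)" using k by (simp add: arrS_def)
    have XAkf: "X (arrA n k) = padd (psmult ck (vtx n k)) (padd (psmult (gam kp) (arrA n k)) (psmult (- gam k * inverse lam * mu k) (arrS n k)))"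
    proof (rule ext)
      fix p
      have "X (arrA n k) p = X (arrel n (Ar k)) p" using AK by simp
      also have "\<dots> = qtaft n lam G X gam (Ar k) p + gam kp * arrel n (Ar k) p - gam k * inverse lam * G (arrel n (Ar k)) p"
        by (simp add: Xarrel kp_def)
      also have "\<dots> = padd (psmult ck (vtx n k)) (padd (psmult (gam kp) (arrA n k)) (psmult (- gam k * inverse lam * mu k) (arrS n k))) p"
        unfolding qA AK[symmetric] GAk by (simp add: padd_def psmult_def algebra_simps)
      finally show "X (arrA n k) p = padd (psmult ck (vtx n k)) (padd (psmult (gam kp) (arrA n k)) (psmult (- gam k * inverse lam * mu k) (arrS n k))) p" .
    qed
    have "G (X (arrA n k)) = psmult lam (X (G (arrA n k)))" by (rule GX[OF PAs(1)])
    hence EG: "padd (psmult ck (vtx n kp)) (padd (psmult (gam kp) (psmult (mu k) (arrS n k))) (psmult (- gam k * inverse lam * mu k) (psmult (mus k) (arrA n k))))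
       = psmult lam (psmult (mu k) (X (arrS n k)))"
      unfolding XAkf GAk by (simp add: Gl(3) Gl(2) Xl(2) PA_psmult PA_padd PAs Gvk GAk GSk)
    have XS0: "X (arrS n k) (kp,[]) = cks"
    proof -
      have "X (arrS n k) (kp,[]) = X (arrel n (As k)) (kp,[])" using SK by simp
      also have "\<dots> = qtaft n lam G X gam (As k) (kp,[]) + gam k * arrel n (As k) (kp,[]) - gam kp * inverse lam * G (arrel n (As k)) (kp,[])"
        by (simp add: Xarrel kp_def)
      also have "\<dots> = cks"
        unfolding qS SK[symmetric] GSk using kp' by (simp add: psmult_def vtx_app arrA_app arrS_app)
      finally show ?thesis .
    qed
    have e3: "ck = lam * (mu k * cks)"
      using fun_cong[OF EG, of "(kp,[])"] XS0 kp by (simp add: padd_def psmult_def vtx_app arrA_app arrS_app)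
    have nz: "mu k * cks \<noteq> 0" using ck c1 by auto
    have e4: "lam * (mu k * cks) = - (mu k * cks)" using e3 c1 by algebra
    have "(lam + 1) * (mu k * cks) = lam * (mu k * cks) + mu k * cks" by (simp add: algebra_simps)
    also have "\<dots> = 0" unfolding e4 by simp
    finally have "(lam + 1) * (mu k * cks) = 0" .
    hence "lam + 1 = 0" using nz by simp
    thus "lam = -1" by (simp only: eq_neg_iff_add_eq_0)
    have k1: "cks = - (ck * mus k)" using h2 by (simp only: eq_neg_iff_add_eq_0)
    have "(mu k * mus k - 1) * ck = 0" using c1 k1 by algebra
    hence K: "mu k * mus k = 1" using ck by simp
    show "\<forall>i<n. mu i * mus i = 1" using kappa_all K kappa_all[OF k] by simp
  qed
qed

end

theorem lemma3p13:
  fixes lam :: "'k::field" and r m n d :: nat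
    and G X :: "(qpath \<Rightarrow> 'k) \<Rightarrow> (qpath \<Rightarrow> 'k)"
    and mu mus gam :: "nat \<Rightarrow> 'k"
  assumes "1 < r" and "0 < m" and "r dvd m" and "primroot lam r" and "of_nat r \<noteq> (0::'k)"
    and "3 \<le> n" and "d < n"
    and "taft_module_algebra n lam r m G X"
    and "inner_faithful n lam r m G X"
    and "linear_action n G X"
    and "\<forall>i<n. mu i \<noteq> 0 \<and> mus i \<noteq> 0"
    and "\<forall>i<n. G (vtx n i) = vtx n (gref n d i)"
    and "\<forall>i<n. G (arrA n i) = psmult (mu i) (arrS n (2 * n - (d + i + 1)))"
    and "\<forall>i<n. G (arrS n i) = psmult (mus i) (arrA n (2 * n - (d + i + 1)))"
    and "descends n G X"
    and "\<forall>i<n. X (vtx n i) = psub (psmult (gam i) (vtx n i))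
                                    (psmult (gam i * inverse lam) (vtx n (gref n d i)))"
  shows
    "(\<forall>j cj cjs. j < n \<and> gref n d j = j
        \<and> qtaft n lam G X gam (Ar j) = psmult cj (arrS n (j + n - 1))
        \<and> qtaft n lam G X gam (As j) = psmult cjs (arrS n j)
        \<longrightarrow> cjs = - inverse (mu j) * cj \<and> (cj \<noteq> 0 \<longrightarrow> (\<forall>i<n. mu i * mus i = 1)))
   \<and> (\<forall>k ck cks. k < n \<and> gref n d k = (k + 1) mod n \<and> gref n d ((k + 1) mod n) = k
        \<and> qtaft n lam G X gam (Ar k) = psmult ck (vtx n k)
        \<and> qtaft n lam G X gam (As k) = psmult cks (vtx n (k + 1))
        \<and> (\<forall>i<n. psub (padd (pmul n (arrS n i) (qtaft n lam G X gam (Ar i)))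
                           (pmul n (qtaft n lam G X gam (As i)) (G (arrA n i))))
                     (padd (pmul n (arrA n (i + 1)) (qtaft n lam G X gam (As ((i + 1) mod n))))
                           (pmul n (qtaft n lam G X gam (Ar ((i + 1) mod n))) (G (arrS n (i + 1)))))
                 \<in> Omega n)
        \<longrightarrow> ck = - mu k * cks \<and> (ck \<noteq> 0 \<longrightarrow> lam = -1 \<and> (\<forall>i<n. mu i * mus i = 1)))"
proof -
  have lam1: "lam \<noteq> 1"
  proof
    assume "lam = 1"
    hence "lam ^ 1 = 1" by simp
    thus False using assms(4) assms(1) unfolding primroot_def by auto
  qed
  have lam0: "lam \<noteq> 0"
  proof
    assume "lam = 0"
    hence "lam ^ r = 0" using assms(1) by simp
    thus False using assms(4) unfolding primroot_def by simp
  qed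
  interpret qsetup lam r m n d G X mu mus gam
    using assms lam1 lam0 by unfold_locales auto
  show ?thesis
  proof (rule conjI)
    show "\<forall>j cj cjs. j < n \<and> gref n d j = j
        \<and> qtaft n lam G X gam (Ar j) = psmult cj (arrS n (j + n - 1))
        \<and> qtaft n lam G X gam (As j) = psmult cjs (arrS n j)
        \<longrightarrow> cjs = - inverse (mu j) * cj \<and> (cj \<noteq> 0 \<longrightarrow> (\<forall>i<n. mu i * mus i = 1))"
      using partI by blast
  next
    show "\<forall>k ck cks. k < n \<and> gref n d k = (k + 1) mod n \<and> gref n d ((k + 1) mod n) = k
        \<and> qtaft n lam G X gam (Ar k) = psmult ck (vtx n k)
        \<and> qtaft n lam G X gam (As k) = psmult cks (vtx n (k + 1))
        \<and> (\<forall>i<n. psub (padd (pmul n (arrS n i) (qtaft n lam G X gam (Ar i)))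
                           (pmul n (qtaft n lam G X gam (As i)) (G (arrA n i))))
                     (padd (pmul n (arrA n (i + 1)) (qtaft n lam G X gam (As ((i + 1) mod n))))
                           (pmul n (qtaft n lam G X gam (Ar ((i + 1) mod n))) (G (arrS n (i + 1)))))
                 \<in> Omega n)
        \<longrightarrow> ck = - mu k * cks \<and> (ck \<noteq> 0 \<longrightarrow> lam = -1 \<and> (\<forall>i<n. mu i * mus i = 1))"
    proof (intro allI impI)
      fix k ck cks
      assume a: "k < n \<and> gref n d k = (k + 1) mod n \<and> gref n d ((k + 1) mod n) = k
        \<and> qtaft n lam G X gam (Ar k) = psmult ck (vtx n k)
        \<and> qtaft n lam G X gam (As k) = psmult cks (vtx n (k + 1))
        \<and> (\<forall>i<n. psub (padd (pmul n (arrS n i) (qtaft n lam G X gam (Ar i)))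
                           (pmul n (qtaft n lam G X gam (As i)) (G (arrA n i))))
                     (padd (pmul n (arrA n (i + 1)) (qtaft n lam G X gam (As ((i + 1) mod n))))
                           (pmul n (qtaft n lam G X gam (Ar ((i + 1) mod n))) (G (arrS n (i + 1)))))
                 \<in> Omega n)"
      show "ck = - mu k * cks \<and> (ck \<noteq> 0 \<longrightarrow> lam = -1 \<and> (\<forall>i<n. mu i * mus i = 1))"
        by (rule partII) (use a in auto)
    qed
  qed
qed
end
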